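(* Let $M>0$ be fixed and, for integers $N\ge1$, let \[ p_N(\lambda)=-\lambda(-M-\lambda)^N+M\,N!\sum_{n=0}^{N-1}\frac{(-M-\lambda)^n}{n!}+(-1)^N M\,N!\,. \] Then there exists $N_0$ such that for all $N\ge N_0$ the polynomial $p_N$ has at least one positive real root.
   Context: $p_N$ is the characteristic polynomial of the coefficient matrix of the linear ODE system satisfied by the $N$-th order $(x,v)$-moments of solutions of Model A, $\partial_tf+v\partial_xf=S[\rho_f](x+v)\rho_f(x)-Mf$, with $M$ the total mass. *)

theory Defs
  imports Complex_Main
begin

definition pN :: "real \<Rightarrow> nat \<Rightarrow> real \<Rightarrow> real" where
  "pN M N lam = - lam * (- M - lam) ^ N
     + M * fact N * (\<Sum>n<N. (- M - lam) ^ n / fact n)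
     + (-1) ^ N * M * fact N"

end

theory Submission
  imports Defs
begin

lemma sum_bound:
  fixes y :: real assumes "y \<ge> 1"
  shows "\<bar>\<Sum>n<N. (-y)^n / fact n\<bar> \<le> real N * y^N"
proof -
  have "\<bar>\<Sum>n<N. (-y)^n / fact n\<bar> \<le> (\<Sum>n<N. \<bar>(-y)^n / fact n\<bar>)" by (rule sum_abs)
  also have "\<dots> \<le> (\<Sum>n<N. y^N)"
  proof (rule sum_mono)
    fix n assume "n \<in> {..<N}"
    hence "n \<le> N" by simp
    have "\<bar>(-y)^n / fact n\<bar> = y^n / fact n" using assms by (simp add: power_abs)
    also have "\<dots> \<le> y^n" using assms by (simp add: divide_le_eq fact_ge_1 mult_le_cancel_left1)
    also have "\<dots> \<le> y^N" using assms \<open>n \<le> N\<close> by (simp add: power_increasing)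
    finally show "\<bar>(-y)^n / fact n\<bar> \<le> y^N" .
  qed
  also have "\<dots> = real N * y^N" by simp
  finally show ?thesis .
qed

theorem lemma3:
  fixes M :: real
  assumes "M > 0"
  shows "\<exists>N0::nat. \<forall>N\<ge>N0. N \<ge> 1 \<longrightarrow> (\<exists>lam::real. lam > 0 \<and> pN M N lam = 0)"
proof -
  have lim: "(\<lambda>N. \<Sum>n<N. (-M)^n / fact n) \<longlonglongrightarrow> exp (-M)"
    using exp_converges[of "-M"] by (simp add: sums_def field_simps)
  have "exp (-M) < 1" using assms by simp
  hence ev1: "\<forall>\<^sub>F N in sequentially. (\<Sum>n<N. (-M)^n / fact n) < 1"
    using order_tendstoD(2)[OF lim] by blast
  have "exp (-M) > -1" by (smt (verit) exp_gt_zero)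
  hence ev2: "\<forall>\<^sub>F N in sequentially. (\<Sum>n<N. (-M)^n / fact n) > -1"
    using order_tendstoD(1)[OF lim] by blast
  from eventually_conj[OF ev1 ev2] obtain N0 where
    N0': "\<forall>N\<ge>N0. (\<Sum>n<N. (-M)^n / fact n) < 1 \<and> (\<Sum>n<N. (-M)^n / fact n) > -1"
    unfolding eventually_sequentially by blast
  have N0: "\<bar>\<Sum>n<N. (-M)^n / fact n\<bar> < 1" if "N \<ge> N0" for N
    using N0' that by (simp add: abs_less_iff)
  show ?thesis
  proof (rule exI[of _ N0], intro allI impI)
    fix N assume "N \<ge> N0" "N \<ge> 1"
    define S where "S = (\<Sum>n<N. (-M)^n / fact n)"
    have S: "\<bar>S\<bar> < 1" using N0 \<open>N \<ge> N0\<close> S_def by simp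
    define g where "g lam = (-1)^N * pN M N lam" for lam
    have sq: "((-1::real)^N) * (-1)^N = 1" by (simp flip: power_mult_distrib)
    have g0: "g 0 > 0"
    proof -
      have "g 0 = M * fact N * ((-1)^N * S + 1)"
        unfolding g_def pN_def S_def using sq by (simp add: algebra_simps)
      moreover have "(-1)^N * S + 1 > 0"
      proof -
        have "\<bar>(-1)^N * S\<bar> < 1" using S by (simp add: abs_mult power_abs)
        thus ?thesis by linarith
      qed
      ultimately show ?thesis using assms by simp
    qed
    define L where "L = M * fact N * (real N + 1) + 1"
    have Lpos: "L > 0" using assms unfolding L_def by (simp add: add_pos_nonneg)
    define y where "y = M + L"
    have y1: "y \<ge> 1" using assms unfolding y_def L_def
      by (smt (verit) mult_nonneg_nonneg of_nat_0_le_iff fact_ge_zero)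
    have xy: "-M - L = -y" unfolding y_def by simp
    define T where "T = (\<Sum>n<N. (-y)^n / fact n)"
    have T: "\<bar>T\<bar> \<le> real N * y^N" unfolding T_def by (rule sum_bound[OF y1])
    have pw: "(-y)^N * (-1)^N = y^N"
      by (metis mult_minus1 power_minus sq mult.commute mult.left_commute mult_1 power_mult_distrib)
    have gL: "g L = - L * y^N + M * fact N * ((-1)^N * T) + M * fact N"
      unfolding g_def pN_def xy T_def using sq pw by (simp add: algebra_simps)
    have yN: "y^N \<ge> 1" using y1 by simp
    have "M * fact N * ((-1)^N * T) \<le> M * fact N * (real N * y^N)"
    proof (intro mult_left_mono)
      have "(-1)^N * T \<le> \<bar>(-1)^N * T\<bar>" by (rule abs_ge_self)
      also have "\<dots> = \<bar>T\<bar>" by (simp add: abs_mult power_abs)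
      finally show "(-1)^N * T \<le> real N * y^N" using T by linarith
    qed (use assms in simp)
    moreover have "M * fact N \<le> M * fact N * y^N" using yN assms
      using mult_left_mono[OF yN, of "M * fact N"] by simp
    ultimately have a1: "g L \<le> (- L) * y ^ N + M * fact N * (real N * y ^ N) + M * fact N * y ^ N"
      unfolding gL by linarith
    have a2: "(- L) * y ^ N + M * fact N * (real N * y ^ N) + M * fact N * y ^ N = - (y ^ N)"
      unfolding L_def by (simp add: algebra_simps)
    have gLneg: "g L < 0" using a1 a2 yN by linarith
    have cont: "\<forall>x. 0 \<le> x \<and> x \<le> L \<longrightarrow> isCont g x"
      unfolding g_def pN_def by (auto intro!: continuous_intros)
    obtain x where x: "0 \<le> x" "x \<le> L" "g x = 0"
      using IVT2[of g L 0 0, OF _ _ _ cont] gLneg g0 Lpos by auto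
    have "x \<noteq> 0" using x g0 by auto
    moreover have "pN M N x = 0" using x(3) unfolding g_def by simp
    ultimately show "\<exists>lam. lam > 0 \<and> pN M N lam = 0" using x by (intro exI[of _ x]) auto
  qed
qed

end
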